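(* Let $\alpha$ be an algebraic number of degree $3$ such that $\mathbb Q(\alpha)/\mathbb Q$ is not a Galois extension. Let $\alpha_1=\alpha,\alpha_2,\alpha_3$ be the conjugates of $\alpha$ over $\mathbb Q$, and assume that the field $\mathbb Q(\alpha_1,\alpha_2,\alpha_3)$ contains no primitive cube root of unity. If $\xi_1,\xi_2,\xi_3$ are roots of unity with $\alpha_1\xi_1+\alpha_2\xi_2+\alpha_3\xi_3=0$, then $\xi_1=\xi_2=\xi_3$, and consequently $\alpha_1+\alpha_2+\alpha_3=0$. *)

theory Defs
  imports Complex_Main "HOL-Computational_Algebra.Computational_Algebra"
begin

definition is_subfield :: "complex set \<Rightarrow> bool" where
  "is_subfield K \<longleftrightarrow> 0 \<in> K \<and> 1 \<in> K \<and>
     (\<forall>x\<in>K. \<forall>y\<in>K. x + y \<in> K \<and> x - y \<in> K \<and> x * y \<in> K) \<and>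
     (\<forall>x\<in>K. x \<noteq> 0 \<longrightarrow> inverse x \<in> K)"

definition gen_field :: "complex set \<Rightarrow> complex set" where
  "gen_field A = \<Inter>{K. is_subfield K \<and> A \<subseteq> K}"

definition algebraic_over_Q :: "complex \<Rightarrow> bool" where
  "algebraic_over_Q x \<longleftrightarrow> (\<exists>q :: rat poly. q \<noteq> 0 \<and> poly (map_poly of_rat q) x = 0)"

text \<open>A subfield K of C is a Galois extension of Q: algebraic, normal (every irreducible
  rational polynomial with a root in K has all its roots in K), and separable
  (automatic in characteristic 0, but stated for completeness).\<close>
definition galois_over_Q :: "complex set \<Rightarrow> bool" where
  "galois_over_Q K \<longleftrightarrow> is_subfield K \<and> (\<forall>x\<in>K. algebraic_over_Q x) \<and>
     (\<forall>q :: rat poly. irreducible q \<longrightarrow> (\<exists>x\<in>K. poly (map_poly of_rat q) x = 0) \<longrightarrow>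
        (\<forall>x. poly (map_poly of_rat q) x = 0 \<longrightarrow> x \<in> K)) \<and>
     (\<forall>q :: rat poly. irreducible q \<longrightarrow> (\<exists>x\<in>K. poly (map_poly of_rat q) x = 0) \<longrightarrow>
        rsquarefree (map_poly (of_rat :: rat \<Rightarrow> complex) q))"

definition root_of_unity :: "complex \<Rightarrow> bool" where
  "root_of_unity z \<longleftrightarrow> (\<exists>n::nat. n > 0 \<and> z ^ n = 1)"

definition primitive_cube_root_of_unity :: "complex \<Rightarrow> bool" where
  "primitive_cube_root_of_unity z \<longleftrightarrow> z ^ 3 = 1 \<and> z \<noteq> 1"

end

theory Submission
  imports Defs "HOL-Computational_Algebra.Field_as_Ring"
begin


abbreviation E :: "rat poly \<Rightarrow> complex poly" where "E \<equiv> map_poly of_rat"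

lemma E_add: "E (p + q) = E p + E q"
  by (rule poly_eqI) (simp add: coeff_map_poly of_rat_add)
lemma E_diff: "E (p - q) = E p - E q"
  by (rule poly_eqI) (simp add: coeff_map_poly of_rat_diff)
lemma E_minus: "E (- p) = - E p"
  by (rule poly_eqI) (simp add: coeff_map_poly of_rat_minus)
lemma E_smult: "E (smult c p) = smult (of_rat c) (E p)"
  by (rule poly_eqI) (simp add: coeff_map_poly of_rat_mult)
lemma E_pCons: "E (pCons a p) = pCons (of_rat a) (E p)"
  by (simp add: map_poly_pCons)
lemma E_mult: "E (p * q) = E p * E q"
  by (induction p) (simp_all add: E_pCons E_add E_smult map_poly_pCons)
lemma E_const: "E [:c:] = [:of_rat c:]"
  by (simp add: map_poly_pCons)
lemma E_one: "E 1 = 1"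
  by (simp add: one_pCons map_poly_pCons)
lemma E_pcompose: "E (pcompose p q) = pcompose (E p) (E q)"
  by (induction p) (simp_all add: pcompose_pCons E_pCons E_add E_mult E_const map_poly_pCons)
lemma E_degree: "degree (E p) = degree p"
  by (rule degree_map_poly) simp
lemma E_eq0: "E p = 0 \<longleftrightarrow> p = 0"
  by (rule map_poly_eq_0_iff) auto
lemma E_monom: "E (monom c k) = monom (of_rat c) k"
  by (simp add: map_poly_monom)
lemma E_pderiv: "E (pderiv p) = pderiv (E p)"
  by (rule poly_eqI) (simp add: coeff_map_poly coeff_pderiv of_rat_mult of_rat_add)

lemma ev_mult: "poly (E (p * q)) z = poly (E p) z * poly (E q) z"
  by (simp add: E_mult)
lemma ev_add: "poly (E (p + q)) z = poly (E p) z + poly (E q) z"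
  by (simp add: E_add)
lemma ev_diff: "poly (E (p - q)) z = poly (E p) z - poly (E q) z"
  by (simp add: E_diff)
lemma ev_const: "poly (E [:c:]) z = of_rat c"
  by (simp add: E_const)
lemma ev_pcompose: "poly (E (pcompose p q)) z = poly (E p) (poly (E q) z)"
  by (simp add: E_pcompose poly_pcompose)
lemma ev_X: "poly (E [:0,1:]) z = z"
  by (simp add: map_poly_pCons)
lemma ev_monom: "poly (E (monom 1 k)) z = z ^ k"
  by (simp add: E_monom poly_monom)

lemma irr_bezout:
  fixes m h :: "rat poly"
  assumes "irreducible m" "\<not> m dvd h"
  shows "\<exists>a b. a * m + b * h = 1"
proof -
  have "coprime m h"
    using assms by (meson coprimeI dvd_trans irreducibleD')
  hence "gcd m h = 1" by simp
  thus ?thesis using bezout_coefficients_fst_snd[of m h] by metis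
qed

lemma irr_dvd:
  assumes "irreducible m" "poly (E m) z = 0" "poly (E h) z = 0"
  shows "m dvd h"
proof (rule ccontr)
  assume "\<not> m dvd h"
  then obtain a b where "a * m + b * h = 1" using irr_bezout assms(1) by blast
  hence "poly (E (a * m + b * h)) z = 1" by (simp add: E_one)
  thus False using assms by (simp add: ev_add ev_mult)
qed

lemma transfer0:
  assumes "irreducible m" "poly (E m) z1 = 0" "poly (E m) z2 = 0" "poly (E h) z1 = 0"
  shows "poly (E h) z2 = 0"
proof -
  obtain k where "h = m * k" using irr_dvd[OF assms(1,2,4)] by blast
  thus ?thesis using assms(3) by (simp add: ev_mult)
qed

lemma transfer:
  assumes "irreducible m" "poly (E m) z1 = 0" "poly (E m) z2 = 0"
    "poly (E f) z1 = poly (E g) z1"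
  shows "poly (E f) z2 = poly (E g) z2"
  using transfer0[OF assms(1-3), of "f - g"] assms(4) by (simp add: ev_diff)

lemma irr_degree: "irreducible (m :: rat poly) \<Longrightarrow> degree m > 0"
  by (metis gr0I irreducible_def is_unit_iff_degree irreducible_not_unit)

lemma irr_sep:
  assumes "irreducible (q :: rat poly)"
  shows "rsquarefree (E q)"
  unfolding rsquarefree_roots
proof (intro allI notI)
  fix a assume a: "poly (E q) a = 0 \<and> poly (pderiv (E q)) a = 0"
  hence "q dvd pderiv q" using irr_dvd[OF assms, of a "pderiv q"] by (simp add: E_pderiv)
  moreover have "pderiv q \<noteq> 0" using irr_degree[OF assms] by (simp add: pderiv_eq_0_iff)
  ultimately have "degree q \<le> degree (pderiv q)" using dvd_imp_degree_le by blast
  thus False using irr_degree[OF assms] degree_pderiv[of q] by simp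
qed

lemma irr_card:
  assumes "irreducible (q :: rat poly)"
  shows "card {z. poly (E q) z = 0} = degree q"
proof -
  have q0: "E q \<noteq> 0" using assms E_eq0 irreducible_def by auto
  have fin: "finite {z. poly (E q) z = 0}" using poly_roots_finite[OF q0] .
  have "E q = smult (lead_coeff (E q)) (\<Prod>z|poly (E q) z = 0. [:-z, 1:])"
    using complex_poly_decompose_rsquarefree[OF irr_sep[OF assms]] by simp
  moreover have "lead_coeff (E q) \<noteq> 0" using q0 by simp
  ultimately have "degree (E q) = degree (\<Prod>z|poly (E q) z = 0. [:-z, 1:])"
    by (metis degree_smult_eq)
  also have "\<dots> = (\<Sum>z|poly (E q) z = 0. degree [:-z, 1:])"
    by (rule degree_prod_sum_eq) auto
  also have "\<dots> = card {z. poly (E q) z = 0}" by simp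
  finally show ?thesis by (simp add: E_degree)
qed




lemma sfD:
  assumes "is_subfield K"
  shows "0 \<in> K" "1 \<in> K" "x \<in> K \<Longrightarrow> y \<in> K \<Longrightarrow> x + y \<in> K"
    "x \<in> K \<Longrightarrow> y \<in> K \<Longrightarrow> x - y \<in> K" "x \<in> K \<Longrightarrow> y \<in> K \<Longrightarrow> x * y \<in> K"
    "x \<in> K \<Longrightarrow> inverse x \<in> K"
  using assms unfolding is_subfield_def by auto

lemma sf_div: "is_subfield K \<Longrightarrow> x \<in> K \<Longrightarrow> y \<in> K \<Longrightarrow> x / y \<in> K"
  by (simp add: divide_inverse sfD)

lemma sf_uminus: "is_subfield K \<Longrightarrow> x \<in> K \<Longrightarrow> - x \<in> K"
  using sfD(4)[of K 0 x] sfD(1) by simp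

lemma sf_pow: "is_subfield K \<Longrightarrow> x \<in> K \<Longrightarrow> x ^ n \<in> K"
  by (induction n) (simp_all add: sfD)

lemma sf_nat: "is_subfield K \<Longrightarrow> of_nat n \<in> K"
  by (induction n) (simp_all add: sfD)

lemma sf_int: "is_subfield K \<Longrightarrow> of_int n \<in> K"
  by (cases n) (simp_all add: sf_nat sf_uminus del: of_nat_Suc)

lemma sf_rat: "is_subfield K \<Longrightarrow> of_rat r \<in> K"
proof -
  assume K: "is_subfield K"
  obtain a b where "r = of_int a / of_int b" by (cases r) (auto simp: Fract_of_int_quotient)
  hence "(of_rat r :: complex) = of_int a / of_int b" by (simp add: of_rat_divide)
  thus ?thesis using K sf_int sf_div by simp
qed

lemma sf_Rats: "is_subfield K \<Longrightarrow> x \<in> \<rat> \<Longrightarrow> x \<in> K"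
  by (auto elim!: Rats_cases simp: sf_rat)

lemma sf_poly: "is_subfield K \<Longrightarrow> z \<in> K \<Longrightarrow> poly (E g) z \<in> K"
  by (induction g) (simp_all add: E_pCons sfD sf_rat)

lemma gen_field_sf: "is_subfield (gen_field A)"
  unfolding gen_field_def is_subfield_def by auto

lemma gen_field_sub: "A \<subseteq> gen_field A"
  unfolding gen_field_def by auto

lemma gen_field_least: "is_subfield K \<Longrightarrow> A \<subseteq> K \<Longrightarrow> gen_field A \<subseteq> K"
  unfolding gen_field_def by auto

lemma Fz_sf:
  assumes m: "irreducible m" "poly (E m) z = 0"
  shows "is_subfield (range (\<lambda>g. poly (E g) z))"
  unfolding is_subfield_def
proof (intro conjI ballI impI)
  show "0 \<in> range (\<lambda>g. poly (E g) z)" by (rule range_eqI[of _ _ 0]) simp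
  show "1 \<in> range (\<lambda>g. poly (E g) z)" by (rule range_eqI[of _ _ 1]) (simp add: E_one)
  fix x y assume "x \<in> range (\<lambda>g. poly (E g) z)" "y \<in> range (\<lambda>g. poly (E g) z)"
  then obtain f g where fg: "x = poly (E f) z" "y = poly (E g) z" by auto
  show "x + y \<in> range (\<lambda>g. poly (E g) z)" by (rule range_eqI[of _ _ "f + g"]) (simp add: fg ev_add)
  show "x - y \<in> range (\<lambda>g. poly (E g) z)" by (rule range_eqI[of _ _ "f - g"]) (simp add: fg ev_diff)
  show "x * y \<in> range (\<lambda>g. poly (E g) z)" by (rule range_eqI[of _ _ "f * g"]) (simp add: fg ev_mult)
next
  fix x assume "x \<in> range (\<lambda>g. poly (E g) z)" "x \<noteq> 0"
  then obtain f where f: "x = poly (E f) z" by auto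
  have "\<not> m dvd f"
  proof
    assume "m dvd f"
    then obtain k where "f = m * k" by (rule dvdE)
    thus False using \<open>x \<noteq> 0\<close> f m by (simp add: ev_mult)
  qed
  then obtain a b where "a * m + b * f = 1" using irr_bezout m(1) by blast
  hence "poly (E (a * m + b * f)) z = 1" by (simp add: E_one)
  hence "poly (E b) z * x = 1" using m f by (simp add: ev_add ev_mult)
  hence "inverse x = poly (E b) z" by (metis inverse_unique mult.commute)
  thus "inverse x \<in> range (\<lambda>g. poly (E g) z)" by simp
qed

lemma fixed_rat:
  assumes m: "irreducible m" and fx: "\<And>z. poly (E m) z = 0 \<Longrightarrow> poly (E g) z = c"
  shows "c \<in> \<rat>"
proof -
  define r where "r = g mod m"
  have m0: "m \<noteq> 0" using m irreducible_def by auto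
  have gr: "g = m * (g div m) + r" by (simp add: r_def)
  have rz: "poly (E r) z = c" if "poly (E m) z = 0" for z
  proof -
    have "poly (E g) z = poly (E r) z"
      by (subst gr) (simp add: ev_add ev_mult that)
    thus ?thesis using fx[OF that] by simp
  qed
  define Q where "Q = E r - [:c:]"
  have dr: "degree r < degree m"
    using degree_mod_less[OF m0, of g] irr_degree[OF m] by (auto simp: r_def)
  show ?thesis
  proof (cases "Q = 0")
    case True
    hence "E r = [:c:]" by (simp add: Q_def)
    hence "coeff (E r) 0 = c" by simp
    hence "c = of_rat (coeff r 0)" by (simp add: coeff_map_poly)
    thus ?thesis by simp
  next
    case False
    have "{z. poly (E m) z = 0} \<subseteq> {z. poly Q z = 0}"
      using rz by (auto simp: Q_def)
    hence "card {z. poly (E m) z = 0} \<le> card {z. poly Q z = 0}"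
      by (intro card_mono poly_roots_finite False)
    also have "\<dots> \<le> degree Q" by (rule card_poly_roots_bound[OF False])
    also have "\<dots> \<le> degree r" unfolding Q_def
      using degree_diff_le_max[of "E r" "[:c:]"] by (simp add: E_degree)
    finally show ?thesis using irr_card[OF m] dr by simp
  qed
qed




lemma ev_of_rat: "poly (E p) (of_rat c) = of_rat (poly p c)"
  by (induction p) (simp_all add: E_pCons of_rat_add of_rat_mult)

lemma cubic_prod: "[:-a,1:]*[:-b,1:]*[:-c,1::complex:] = [: -(a*b*c), a*b+a*c+b*c, -(a+b+c), 1:]"
  by (simp add: algebra_simps)

locale cubic =
  fixes p :: "rat poly" and \<alpha>1 \<alpha>2 \<alpha>3 :: complex
  assumes irr: "irreducible p" and deg: "degree p = 3"
    and r1: "poly (E p) \<alpha>1 = 0" and r2: "poly (E p) \<alpha>2 = 0" and r3: "poly (E p) \<alpha>3 = 0"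
    and d12: "\<alpha>1 \<noteq> \<alpha>2" and d13: "\<alpha>1 \<noteq> \<alpha>3" and d23: "\<alpha>2 \<noteq> \<alpha>3"
begin

definition "L = (of_rat (lead_coeff p) :: complex)"

lemma L0: "L \<noteq> 0"
proof -
  have "p \<noteq> 0" using deg by auto
  thus ?thesis by (simp add: L_def)
qed

lemma factor: "E p = smult L ([:-\<alpha>1,1:]*[:-\<alpha>2,1:]*[:-\<alpha>3,1:])"
proof -
  obtain q1 where q1: "E p = [:-\<alpha>1,1:] * q1" using r1 poly_eq_0_iff_dvd by blast
  have "poly q1 \<alpha>2 = 0" using r2 d12 q1 by simp
  then obtain q2 where q2: "q1 = [:-\<alpha>2,1:] * q2" using poly_eq_0_iff_dvd by blast
  have "poly q2 \<alpha>3 = 0" using r3 d13 d23 q1 q2 by simp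
  then obtain q3 where q3: "q2 = [:-\<alpha>3,1:] * q3" using poly_eq_0_iff_dvd by blast
  define C where "C = [:-\<alpha>1,1:]*[:-\<alpha>2,1:]*[:-\<alpha>3,1::complex:]"
  have Ep: "E p = C * q3" using q1 q2 q3 unfolding C_def by (metis mult.assoc)
  have dC: "degree C = 3" "lead_coeff C = 1" unfolding C_def cubic_prod by simp_all
  have "E p \<noteq> 0" using deg E_eq0 by force
  hence q30: "q3 \<noteq> 0" using Ep by auto
  have C0: "C \<noteq> 0" using dC by auto
  have "degree (E p) = 3 + degree q3" using Ep q30 C0 dC
    by (simp add: degree_mult_eq)
  hence "degree q3 = 0" using deg E_degree by simp
  then obtain c where c: "q3 = [:c:]" by (metis degree_eq_zeroE)
  have "lead_coeff (E p) = c" using Ep c dC by (simp add: lead_coeff_mult)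
  hence "c = L" using deg by (simp add: L_def E_degree coeff_map_poly)
  thus ?thesis using Ep c by (simp add: mult.commute C_def)
qed

lemma ev_p: "poly (E p) x = L * ((x - \<alpha>1) * (x - \<alpha>2) * (x - \<alpha>3))"
  by (subst factor) (simp add: algebra_simps)

lemma roots_iff: "poly (E p) z = 0 \<longleftrightarrow> z = \<alpha>1 \<or> z = \<alpha>2 \<or> z = \<alpha>3"
  using ev_p L0 by simp

lemma coeffs: "of_rat (coeff p 2) = - L * (\<alpha>1+\<alpha>2+\<alpha>3)"
   "of_rat (coeff p 1) = L * (\<alpha>1*\<alpha>2+\<alpha>1*\<alpha>3+\<alpha>2*\<alpha>3)"
   "of_rat (coeff p 0) = - L * (\<alpha>1*\<alpha>2*\<alpha>3)"
proof -
  have "coeff (E p) 2 = - L * (\<alpha>1+\<alpha>2+\<alpha>3)"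
    by (simp add: factor cubic_prod numeral_2_eq_2 algebra_simps)
  thus "of_rat (coeff p 2) = - L * (\<alpha>1+\<alpha>2+\<alpha>3)" by (simp add: coeff_map_poly)
  have "coeff (E p) 1 = L * (\<alpha>1*\<alpha>2+\<alpha>1*\<alpha>3+\<alpha>2*\<alpha>3)"
    by (simp add: factor cubic_prod algebra_simps)
  thus "of_rat (coeff p 1) = L * (\<alpha>1*\<alpha>2+\<alpha>1*\<alpha>3+\<alpha>2*\<alpha>3)" by (simp add: coeff_map_poly)
  have "coeff (E p) 0 = - L * (\<alpha>1*\<alpha>2*\<alpha>3)"
    by (simp add: factor cubic_prod algebra_simps)
  thus "of_rat (coeff p 0) = - L * (\<alpha>1*\<alpha>2*\<alpha>3)" by (simp add: coeff_map_poly)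
qed

lemma divL: "x = (L * x) / L"
  using L0 by simp

lemma L_rat: "L \<in> \<rat>" by (simp add: L_def)

lemma s1: "\<alpha>1+\<alpha>2+\<alpha>3 \<in> \<rat>"
proof -
  have "\<alpha>1+\<alpha>2+\<alpha>3 = - of_rat (coeff p 2) / L" using coeffs(1) divL[of "\<alpha>1+\<alpha>2+\<alpha>3"] by simp
  thus ?thesis using L_rat by simp
qed
lemma s2: "\<alpha>1*\<alpha>2+\<alpha>1*\<alpha>3+\<alpha>2*\<alpha>3 \<in> \<rat>"
proof -
  have "\<alpha>1*\<alpha>2+\<alpha>1*\<alpha>3+\<alpha>2*\<alpha>3 = of_rat (coeff p 1) / L" using coeffs(2) divL[of "\<alpha>1*\<alpha>2+\<alpha>1*\<alpha>3+\<alpha>2*\<alpha>3"] by simp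
  thus ?thesis using L_rat by simp
qed
lemma s3: "\<alpha>1*\<alpha>2*\<alpha>3 \<in> \<rat>"
proof -
  have "\<alpha>1*\<alpha>2*\<alpha>3 = - of_rat (coeff p 0) / L" using coeffs(3) divL[of "\<alpha>1*\<alpha>2*\<alpha>3"] by simp
  thus ?thesis using L_rat by simp
qed

lemma no_rat_root: "poly (E p) z = 0 \<Longrightarrow> z \<notin> \<rat>"
proof
  assume z: "poly (E p) z = 0" "z \<in> \<rat>"
  then obtain c where c: "z = of_rat c" by (auto elim: Rats_cases)
  hence "poly p c = 0" using z ev_of_rat by simp
  then obtain q where q: "p = [:-c,1:] * q" using poly_eq_0_iff_dvd by blast
  have "q \<noteq> 0" using q deg by auto
  have "degree ([:-c,1:]*q) = degree [:-c,1:] + degree q" by (rule degree_mult_eq) (use \<open>q \<noteq> 0\<close> in auto)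
  hence "degree q = 2" using q deg by simp
  moreover have "is_unit [:-c,1:] \<or> is_unit q" using irr q irreducibleD by blast
  moreover have "\<not> is_unit [:-c,1:]" by (subst is_unit_iff_degree) auto
  moreover have "\<not> is_unit q" using \<open>q \<noteq> 0\<close> \<open>degree q = 2\<close> by (subst is_unit_iff_degree) auto
  ultimately show False by blast
qed

end



lemma perm3:
  fixes f :: "complex \<Rightarrow> complex"
  assumes "b1 \<in> {a1,a2,a3}" "b2 \<in> {a1,a2,a3}" "b3 \<in> {a1,a2,a3}" "b1 \<noteq> b2" "b1 \<noteq> b3" "b2 \<noteq> b3"
  shows "f b1 + f b2 + f b3 = f a1 + f a2 + f a3"
    "f b1 * f b2 + f b1 * f b3 + f b2 * f b3 = f a1 * f a2 + f a1 * f a3 + f a2 * f a3"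
    "f b1 * f b2 * f b3 = f a1 * f a2 * f a3"
proof -
  have "(b1 = a1 \<and> b2 = a2 \<and> b3 = a3) \<or> (b1 = a1 \<and> b2 = a3 \<and> b3 = a2) \<or>
        (b1 = a2 \<and> b2 = a1 \<and> b3 = a3) \<or> (b1 = a2 \<and> b2 = a3 \<and> b3 = a1) \<or>
        (b1 = a3 \<and> b2 = a1 \<and> b3 = a2) \<or> (b1 = a3 \<and> b2 = a2 \<and> b3 = a1)"
    using assms by blast
  thus "f b1 + f b2 + f b3 = f a1 + f a2 + f a3"
    "f b1 * f b2 + f b1 * f b3 + f b2 * f b3 = f a1 * f a2 + f a1 * f a3 + f a2 * f a3"
    "f b1 * f b2 * f b3 = f a1 * f a2 * f a3"
    by (elim disjE; simp add: ac_simps)+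
qed

context cubic
begin

lemma sK: "is_subfield (gen_field {\<alpha>1})" "\<alpha>1 \<in> gen_field {\<alpha>1}"
  using gen_field_sf gen_field_sub by auto

lemma KQ1: "gen_field {\<alpha>1} \<subseteq> range (\<lambda>g. poly (E g) \<alpha>1)"
proof (rule gen_field_least)
  show "is_subfield (range (\<lambda>g. poly (E g) \<alpha>1))" by (rule Fz_sf[OF irr r1])
  show "{\<alpha>1} \<subseteq> range (\<lambda>g. poly (E g) \<alpha>1)" by (auto intro!: range_eqI[of _ _ "[:0,1:]"] simp: ev_X)
qed

lemma disc_rat_in_K:
  assumes "(\<alpha>1-\<alpha>2)*(\<alpha>1-\<alpha>3)*(\<alpha>2-\<alpha>3) \<in> \<rat>"
  shows "\<alpha>2 \<in> gen_field {\<alpha>1}" "\<alpha>3 \<in> gen_field {\<alpha>1}"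
proof -
  let ?K = "gen_field {\<alpha>1}"
  note K = sK(1) and a1 = sK(2)
  have sig1: "\<alpha>1+\<alpha>2+\<alpha>3 \<in> ?K" using sf_Rats[OF K s1] .
  have sig2: "\<alpha>1*\<alpha>2+\<alpha>1*\<alpha>3+\<alpha>2*\<alpha>3 \<in> ?K" using sf_Rats[OF K s2] .
  have dK: "(\<alpha>1-\<alpha>2)*(\<alpha>1-\<alpha>3)*(\<alpha>2-\<alpha>3) \<in> ?K" using sf_Rats[OF K assms] .
  have sum: "\<alpha>2+\<alpha>3 \<in> ?K"
  proof -
    have "\<alpha>2+\<alpha>3 = (\<alpha>1+\<alpha>2+\<alpha>3) - \<alpha>1" by simp
    thus ?thesis using sfD(4)[OF K sig1 a1] by simp
  qed
  have prod: "\<alpha>2*\<alpha>3 \<in> ?K"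
  proof -
    have h: "\<alpha>2*\<alpha>3 = (\<alpha>1*\<alpha>2+\<alpha>1*\<alpha>3+\<alpha>2*\<alpha>3) - \<alpha>1 * (\<alpha>2+\<alpha>3)" by (simp add: algebra_simps)
    show ?thesis using sfD(4)[OF K sig2 sfD(5)[OF K a1 sum]] h by metis
  qed
  have "(\<alpha>1-\<alpha>2)*(\<alpha>1-\<alpha>3) = (\<alpha>1 * \<alpha>1 - \<alpha>1 * (\<alpha>2+\<alpha>3)) + \<alpha>2*\<alpha>3"
    by (simp add: algebra_simps)
  also have "\<dots> \<in> ?K"
    using sfD(3)[OF K sfD(4)[OF K sfD(5)[OF K a1 a1] sfD(5)[OF K a1 sum]] prod] .
  finally have D1: "(\<alpha>1-\<alpha>2)*(\<alpha>1-\<alpha>3) \<in> ?K" .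
  have "(\<alpha>1-\<alpha>2)*(\<alpha>1-\<alpha>3) \<noteq> 0" using d12 d13 by simp
  hence "\<alpha>2-\<alpha>3 = ((\<alpha>1-\<alpha>2)*(\<alpha>1-\<alpha>3)*(\<alpha>2-\<alpha>3)) / ((\<alpha>1-\<alpha>2)*(\<alpha>1-\<alpha>3))" by simp
  also have "\<dots> \<in> ?K" using sf_div[OF K dK D1] .
  finally have dif: "\<alpha>2-\<alpha>3 \<in> ?K" .
  have two: "(2::complex) \<in> ?K" using sfD(3)[OF K sfD(2)[OF K] sfD(2)[OF K]] by simp
  have "\<alpha>2 = ((\<alpha>2+\<alpha>3) + (\<alpha>2-\<alpha>3)) / 2" by simp
  also have "\<dots> \<in> ?K" using sf_div[OF K sfD(3)[OF K sum dif] two] .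
  finally show a2: "\<alpha>2 \<in> ?K" .
  have "\<alpha>3 = (\<alpha>2+\<alpha>3) - \<alpha>2" by simp
  thus "\<alpha>3 \<in> ?K" using sfD(4)[OF K sum a2] by simp
qed

lemma galois_of_disc:
  assumes disc: "(\<alpha>1-\<alpha>2)*(\<alpha>1-\<alpha>3)*(\<alpha>2-\<alpha>3) \<in> \<rat>"
  shows "galois_over_Q (gen_field {\<alpha>1})"
proof -
  let ?K = "gen_field {\<alpha>1}"
  note K = sK(1) and a1K = sK(2)
  note a2K = disc_rat_in_K(1)[OF disc] and a3K = disc_rat_in_K(2)[OF disc]
  obtain h2 where h2: "\<alpha>2 = poly (E h2) \<alpha>1" using a2K KQ1 by auto
  obtain h3 where h3: "\<alpha>3 = poly (E h3) \<alpha>1" using a3K KQ1 by auto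
  have rootc: "poly (E h) z \<in> {\<alpha>1,\<alpha>2,\<alpha>3}" if z: "poly (E p) z = 0" and hr: "poly (E p) (poly (E h) \<alpha>1) = 0" for z h
  proof -
    have "poly (E (pcompose p h)) \<alpha>1 = poly (E 0) \<alpha>1" using hr by (simp add: ev_pcompose)
    hence "poly (E (pcompose p h)) z = poly (E 0) z" by (rule transfer[OF irr r1 z])
    hence "poly (E p) (poly (E h) z) = 0" by (simp add: ev_pcompose)
    thus ?thesis using roots_iff by auto
  qed
  have neqc: "poly (E f) z \<noteq> poly (E g) z" if z: "poly (E p) z = 0" and fg: "poly (E f) \<alpha>1 \<noteq> poly (E g) \<alpha>1" for z f g
    using transfer[OF irr z r1, of f g] fg by blast
  have X: "poly (E [:0,1:]) z = z" for z by (rule ev_X)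
  have perm: "z \<in> {\<alpha>1,\<alpha>2,\<alpha>3} \<and> poly (E h2) z \<in> {\<alpha>1,\<alpha>2,\<alpha>3} \<and> poly (E h3) z \<in> {\<alpha>1,\<alpha>2,\<alpha>3}
     \<and> z \<noteq> poly (E h2) z \<and> z \<noteq> poly (E h3) z \<and> poly (E h2) z \<noteq> poly (E h3) z"
    if z: "poly (E p) z = 0" for z
  proof (intro conjI)
    show "z \<in> {\<alpha>1,\<alpha>2,\<alpha>3}" using z roots_iff by auto
    show "poly (E h2) z \<in> {\<alpha>1,\<alpha>2,\<alpha>3}" using rootc[OF z, of h2] h2 r2 by simp
    show "poly (E h3) z \<in> {\<alpha>1,\<alpha>2,\<alpha>3}" using rootc[OF z, of h3] h3 r3 by simp
    show "z \<noteq> poly (E h2) z" using neqc[OF z, of "[:0,1:]" h2] h2 d12 by (simp add: X)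
    show "z \<noteq> poly (E h3) z" using neqc[OF z, of "[:0,1:]" h3] h3 d13 by (simp add: X)
    show "poly (E h2) z \<noteq> poly (E h3) z" using neqc[OF z, of h2 h3] h2 h3 d23 by simp
  qed
  have Tex: "\<exists>T. T \<noteq> 0 \<and> (\<forall>t. poly (E T) t = (t - poly (E g) \<alpha>1)*(t - poly (E g) \<alpha>2)*(t - poly (E g) \<alpha>3))" for g
  proof -
    define f where "f = (\<lambda>x. poly (E g) x)"
    define g2 where "g2 = pcompose g h2"
    define g3 where "g3 = pcompose g h3"
    have ev2: "poly (E g2) z = f (poly (E h2) z)" for z by (simp add: g2_def f_def ev_pcompose)
    have ev3: "poly (E g3) z = f (poly (E h3) z)" for z by (simp add: g3_def f_def ev_pcompose)
    have c1: "f \<alpha>1 + f \<alpha>2 + f \<alpha>3 \<in> \<rat>"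
    proof (rule fixed_rat[OF irr, of "g + g2 + g3"])
      fix z assume z: "poly (E p) z = 0"
      show "poly (E (g + g2 + g3)) z = f \<alpha>1 + f \<alpha>2 + f \<alpha>3"
        using perm3(1)[of z \<alpha>1 \<alpha>2 \<alpha>3 "poly (E h2) z" "poly (E h3) z" f] perm[OF z]
        by (simp add: ev_add ev2 ev3 f_def[symmetric])
    qed
    have c2: "f \<alpha>1 * f \<alpha>2 + f \<alpha>1 * f \<alpha>3 + f \<alpha>2 * f \<alpha>3 \<in> \<rat>"
    proof (rule fixed_rat[OF irr, of "g * g2 + g * g3 + g2 * g3"])
      fix z assume z: "poly (E p) z = 0"
      show "poly (E (g * g2 + g * g3 + g2 * g3)) z = f \<alpha>1 * f \<alpha>2 + f \<alpha>1 * f \<alpha>3 + f \<alpha>2 * f \<alpha>3"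
        using perm3(2)[of z \<alpha>1 \<alpha>2 \<alpha>3 "poly (E h2) z" "poly (E h3) z" f] perm[OF z]
        by (simp add: ev_add ev_mult ev2 ev3 f_def[symmetric])
    qed
    have c3: "f \<alpha>1 * f \<alpha>2 * f \<alpha>3 \<in> \<rat>"
    proof (rule fixed_rat[OF irr, of "g * g2 * g3"])
      fix z assume z: "poly (E p) z = 0"
      show "poly (E (g * g2 * g3)) z = f \<alpha>1 * f \<alpha>2 * f \<alpha>3"
        using perm3(3)[of z \<alpha>1 \<alpha>2 \<alpha>3 "poly (E h2) z" "poly (E h3) z" f] perm[OF z]
        by (simp add: ev_mult ev2 ev3 f_def[symmetric])
    qed
    obtain q1 where q1: "f \<alpha>1 + f \<alpha>2 + f \<alpha>3 = of_rat q1" using c1 by (auto elim: Rats_cases)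
    obtain q2 where q2: "f \<alpha>1 * f \<alpha>2 + f \<alpha>1 * f \<alpha>3 + f \<alpha>2 * f \<alpha>3 = of_rat q2" using c2 by (auto elim: Rats_cases)
    obtain q3 where q3: "f \<alpha>1 * f \<alpha>2 * f \<alpha>3 = of_rat q3" using c3 by (auto elim: Rats_cases)
    define T where "T = [:-q3, q2, -q1, 1:]"
    have "T \<noteq> 0" by (simp add: T_def)
    moreover have "poly (E T) t = (t - f \<alpha>1)*(t - f \<alpha>2)*(t - f \<alpha>3)" for t
    proof -
      have "poly (E T) t = - of_rat q3 + t * (of_rat q2 + t * (- of_rat q1 + t))"
        by (simp add: T_def E_pCons of_rat_minus)
      also have "\<dots> = (t - f \<alpha>1)*(t - f \<alpha>2)*(t - f \<alpha>3)"
        unfolding q1[symmetric] q2[symmetric] q3[symmetric] by (simp add: algebra_simps)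
      finally show ?thesis .
    qed
    ultimately show ?thesis unfolding f_def by blast
  qed
  show ?thesis unfolding galois_over_Q_def
  proof (intro conjI allI impI ballI)
    show "is_subfield ?K" by (rule K)
  next
    fix x assume "x \<in> ?K"
    then obtain g where g: "x = poly (E g) \<alpha>1" using KQ1 by auto
    obtain T where T: "T \<noteq> 0" "\<And>t. poly (E T) t = (t - poly (E g) \<alpha>1)*(t - poly (E g) \<alpha>2)*(t - poly (E g) \<alpha>3)"
      using Tex[of g] by blast
    show "algebraic_over_Q x" unfolding algebraic_over_Q_def
      using T g by (intro exI[of _ T]) simp
  next
    fix q :: "rat poly" and y assume q: "irreducible q" and ex: "\<exists>x\<in>?K. poly (E q) x = 0" and y: "poly (E q) y = 0"
    then obtain x where x: "x \<in> ?K" "poly (E q) x = 0" by blast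
    then obtain g where g: "x = poly (E g) \<alpha>1" using KQ1 by auto
    obtain T where T: "T \<noteq> 0" "\<And>t. poly (E T) t = (t - poly (E g) \<alpha>1)*(t - poly (E g) \<alpha>2)*(t - poly (E g) \<alpha>3)"
      using Tex[of g] by blast
    have "q dvd T" using irr_dvd[OF q x(2)] T(2)[of x] g by simp
    then obtain k where "T = q * k" by (rule dvdE)
    hence "poly (E T) y = 0" using y by (simp add: ev_mult)
    hence "y = poly (E g) \<alpha>1 \<or> y = poly (E g) \<alpha>2 \<or> y = poly (E g) \<alpha>3" using T(2)[of y] by simp
    thus "y \<in> ?K" using sf_poly[OF K a1K] sf_poly[OF K a2K] sf_poly[OF K a3K] by auto
  next
    fix q :: "rat poly" assume q: "irreducible q"
    show "rsquarefree (E q)" by (rule irr_sep[OF q])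
  qed
qed

end



lemma comb3:
  fixes a1 a2 a3 v1 v2 v3 :: complex
  assumes "v1 \<in> {a1,a2,a3}" "v2 \<in> {a1,a2,a3}" "v3 \<in> {a1,a2,a3}" "v1 \<noteq> v2" "v1 \<noteq> v3" "v2 \<noteq> v3"
    and "(v1 = a1 \<and> v2 = a2) \<or> (v1 = a1 \<and> v3 = a3) \<or> (v2 = a2 \<and> v3 = a3) \<or> (v1 \<noteq> a1 \<and> v2 \<noteq> a2 \<and> v3 \<noteq> a3)"
  shows "(v1-v2)*(v1-v3)*(v2-v3) = (a1-a2)*(a1-a3)*(a2-a3)"
proof -
  have "(v1 = a1 \<and> v2 = a2 \<and> v3 = a3) \<or> (v1 = a2 \<and> v2 = a3 \<and> v3 = a1) \<or>
        (v1 = a3 \<and> v2 = a1 \<and> v3 = a2)"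
    using assms by blast
  thus ?thesis
  proof (elim disjE)
    assume "v1 = a1 \<and> v2 = a2 \<and> v3 = a3" thus ?thesis by simp
  next
    assume "v1 = a2 \<and> v2 = a3 \<and> v3 = a1" thus ?thesis by (simp add: algebra_simps)
  next
    assume "v1 = a3 \<and> v2 = a1 \<and> v3 = a2" thus ?thesis by (simp add: algebra_simps)
  qed
qed

locale cyc = cubic +
  fixes \<zeta> :: complex and m :: "rat poly"
  assumes m_irr: "irreducible m" and m_root: "poly (E m) \<zeta> = 0"
    and m_pow: "\<And>z. poly (E m) z = 0 \<Longrightarrow> \<exists>k. z = \<zeta> ^ k"
begin

lemma F_sf: "is_subfield (range (\<lambda>h. poly (E h) \<zeta>))"
  by (rule Fz_sf[OF m_irr m_root])

lemma rootc: "poly (E p) (poly (E h) \<zeta>) = 0 \<Longrightarrow> poly (E m) z = 0 \<Longrightarrow> poly (E p) (poly (E h) z) = 0"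
proof -
  assume hr: "poly (E p) (poly (E h) \<zeta>) = 0" and z: "poly (E m) z = 0"
  have "poly (E (pcompose p h)) \<zeta> = poly (E 0) \<zeta>" using hr by (simp add: ev_pcompose)
  hence "poly (E (pcompose p h)) z = poly (E 0) z" by (rule transfer[OF m_irr m_root z])
  thus ?thesis by (simp add: ev_pcompose)
qed

lemma shift: "poly (E m) w = 0 \<Longrightarrow> poly (E h) w \<in> range (\<lambda>h. poly (E h) \<zeta>)"
proof -
  assume "poly (E m) w = 0"
  then obtain j where "w = \<zeta> ^ j" using m_pow by blast
  hence "poly (E h) w = poly (E (pcompose h (monom 1 j))) \<zeta>" by (simp add: ev_pcompose ev_monom)
  thus ?thesis by simp
qed

lemma fixprop:
  assumes z: "poly (E m) z = 0" and w: "poly (E m) w = 0"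
    and fz: "poly (E f) z = poly (E f) \<zeta>" and fw: "poly (E f) w = poly (E h) \<zeta>"
  shows "poly (E h) z = poly (E h) \<zeta>"
proof -
  obtain k where k: "z = \<zeta> ^ k" using m_pow[OF z] by blast
  obtain j where j: "w = \<zeta> ^ j" using m_pow[OF w] by blast
  have "poly (E (pcompose f (monom 1 k))) \<zeta> = poly (E f) \<zeta>" using fz k by (simp add: ev_pcompose ev_monom)
  hence "poly (E (pcompose f (monom 1 k))) w = poly (E f) w" by (rule transfer[OF m_irr m_root w])
  hence e1: "poly (E f) (w ^ k) = poly (E h) \<zeta>" using fw by (simp add: ev_pcompose ev_monom)
  have "poly (E (pcompose f (monom 1 j))) \<zeta> = poly (E h) \<zeta>" using fw j by (simp add: ev_pcompose ev_monom)
  hence "poly (E (pcompose f (monom 1 j))) z = poly (E h) z" by (rule transfer[OF m_irr m_root z])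
  hence e2: "poly (E f) (z ^ j) = poly (E h) z" by (simp add: ev_pcompose ev_monom)
  have "w ^ k = z ^ j" using j k by (simp add: power_mult[symmetric] mult.commute)
  thus ?thesis using e1 e2 by simp
qed

lemma moved:
  assumes r: "poly (E p) (poly (E f) \<zeta>) = 0"
  shows "\<exists>w. poly (E m) w = 0 \<and> poly (E f) w \<noteq> poly (E f) \<zeta>"
proof (rule ccontr)
  assume "\<not> ?thesis"
  hence "poly (E f) \<zeta> \<in> \<rat>" by (intro fixed_rat[OF m_irr, of f]) auto
  thus False using no_rat_root[OF r] by blast
qed

lemma nextfix:
  assumes z: "poly (E m) z = 0" and fz: "poly (E f) z = poly (E f) \<zeta>"
    and rf: "poly (E p) (poly (E f) \<zeta>) = 0"
    and mem: "\<And>w. poly (E m) w = 0 \<Longrightarrow> poly (E f) w \<in> {poly (E f) \<zeta>, poly (E g1) \<zeta>, poly (E g2) \<zeta>}"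
  shows "poly (E g1) z = poly (E g1) \<zeta> \<or> poly (E g2) z = poly (E g2) \<zeta>"
proof -
  obtain w where w: "poly (E m) w = 0" "poly (E f) w \<noteq> poly (E f) \<zeta>" using moved[OF rf] by blast
  hence "poly (E f) w = poly (E g1) \<zeta> \<or> poly (E f) w = poly (E g2) \<zeta>" using mem[OF w(1)] by auto
  thus ?thesis using fixprop[OF z w(1) fz] by blast
qed

lemma crux:
  assumes r: "poly (E p) (poly (E g) \<zeta>) = 0"
  shows "(\<alpha>1-\<alpha>2)*(\<alpha>1-\<alpha>3)*(\<alpha>2-\<alpha>3) \<in> \<rat>"
proof -
  let ?F = "range (\<lambda>h. poly (E h) \<zeta>)"
  note F = F_sf
  define \<gamma> where "\<gamma> = poly (E g) \<zeta>"
  obtain w where w: "poly (E m) w = 0" "poly (E g) w \<noteq> \<gamma>" using moved[OF r] \<gamma>_def by blast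
  define \<gamma>' where "\<gamma>' = poly (E g) w"
  have gF: "\<gamma> \<in> ?F" by (simp add: \<gamma>_def)
  have g'F: "\<gamma>' \<in> ?F" using shift[OF w(1)] by (simp add: \<gamma>'_def)
  have gr: "\<gamma> \<in> {\<alpha>1,\<alpha>2,\<alpha>3}" using r roots_iff \<gamma>_def by auto
  have g'r: "\<gamma>' \<in> {\<alpha>1,\<alpha>2,\<alpha>3}" using rootc[OF r w(1)] roots_iff \<gamma>'_def by auto
  have gg: "\<gamma> \<noteq> \<gamma>'" using w(2) \<gamma>'_def by simp
  have sF: "\<alpha>1+\<alpha>2+\<alpha>3 \<in> ?F" using sf_Rats[OF F s1] .
  have allF: "x \<in> ?F" if x: "x \<in> {\<alpha>1,\<alpha>2,\<alpha>3}" for x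
  proof (cases "x = \<gamma> \<or> x = \<gamma>'")
    case True thus ?thesis using gF g'F by auto
  next
    case False
    have "x + \<gamma> + \<gamma>' = \<alpha>1+\<alpha>2+\<alpha>3"
      using perm3(1)[of x \<alpha>1 \<alpha>2 \<alpha>3 \<gamma> \<gamma>' "\<lambda>x. x"] x gr g'r gg False by auto
    hence "x = (\<alpha>1+\<alpha>2+\<alpha>3) - \<gamma> - \<gamma>'" by (simp add: algebra_simps)
    thus ?thesis using sfD(4)[OF F sfD(4)[OF F sF gF] g'F] by simp
  qed
  obtain f1 where f1: "\<alpha>1 = poly (E f1) \<zeta>" using allF[of \<alpha>1] by auto
  obtain f2 where f2: "\<alpha>2 = poly (E f2) \<zeta>" using allF[of \<alpha>2] by auto
  obtain f3 where f3: "\<alpha>3 = poly (E f3) \<zeta>" using allF[of \<alpha>3] by auto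
  have memf: "poly (E f) z \<in> {\<alpha>1,\<alpha>2,\<alpha>3}" if "poly (E m) z = 0" "f \<in> {f1,f2,f3}" for z f
  proof -
    have "poly (E p) (poly (E f) \<zeta>) = 0" using that(2) f1 f2 f3 r1 r2 r3 by auto
    thus ?thesis using rootc[OF _ that(1)] roots_iff by blast
  qed
  have inj: "poly (E f) z \<noteq> poly (E f') z" if "poly (E m) z = 0" "poly (E f) \<zeta> \<noteq> poly (E f') \<zeta>" for z f f'
    using transfer[OF m_irr that(1) m_root, of f f'] that(2) by blast
  have D: "(poly (E f1) z - poly (E f2) z)*(poly (E f1) z - poly (E f3) z)*(poly (E f2) z - poly (E f3) z)
        = (\<alpha>1-\<alpha>2)*(\<alpha>1-\<alpha>3)*(\<alpha>2-\<alpha>3)" if z: "poly (E m) z = 0" for z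
  proof (rule comb3)
    show "poly (E f1) z \<in> {\<alpha>1,\<alpha>2,\<alpha>3}" "poly (E f2) z \<in> {\<alpha>1,\<alpha>2,\<alpha>3}" "poly (E f3) z \<in> {\<alpha>1,\<alpha>2,\<alpha>3}"
      using memf[OF z] by auto
    show "poly (E f1) z \<noteq> poly (E f2) z" using inj[OF z] f1 f2 d12 by auto
    show "poly (E f1) z \<noteq> poly (E f3) z" using inj[OF z] f1 f3 d13 by auto
    show "poly (E f2) z \<noteq> poly (E f3) z" using inj[OF z] f2 f3 d23 by auto
    have n1: "poly (E f2) z = \<alpha>2 \<or> poly (E f3) z = \<alpha>3" if "poly (E f1) z = \<alpha>1"
      using nextfix[OF z, of f1 f2 f3] that f1 f2 f3 r1 memf by auto
    have n2: "poly (E f1) z = \<alpha>1 \<or> poly (E f3) z = \<alpha>3" if "poly (E f2) z = \<alpha>2"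
      using nextfix[OF z, of f2 f1 f3] that f1 f2 f3 r2 memf by auto
    have n3: "poly (E f1) z = \<alpha>1 \<or> poly (E f2) z = \<alpha>2" if "poly (E f3) z = \<alpha>3"
      using nextfix[OF z, of f3 f1 f2] that f1 f2 f3 r3 memf by auto
    show "(poly (E f1) z = \<alpha>1 \<and> poly (E f2) z = \<alpha>2) \<or> (poly (E f1) z = \<alpha>1 \<and> poly (E f3) z = \<alpha>3) \<or>
      (poly (E f2) z = \<alpha>2 \<and> poly (E f3) z = \<alpha>3) \<or> (poly (E f1) z \<noteq> \<alpha>1 \<and> poly (E f2) z \<noteq> \<alpha>2 \<and> poly (E f3) z \<noteq> \<alpha>3)"
      using n1 n2 n3 by blast
  qed
  show ?thesis
  proof (rule fixed_rat[OF m_irr, of "(f1-f2)*(f1-f3)*(f2-f3)"])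
    fix z assume z: "poly (E m) z = 0"
    show "poly (E ((f1-f2)*(f1-f3)*(f2-f3))) z = (\<alpha>1-\<alpha>2)*(\<alpha>1-\<alpha>3)*(\<alpha>2-\<alpha>3)"
      using D[OF z] by (simp add: ev_mult ev_diff)
  qed
qed

end



lemma sf_numeral: "is_subfield K \<Longrightarrow> numeral n \<in> K"
  using sf_nat[of K "numeral n"] by simp

lemma idA: "((c*x+d)-a1)*((c*x+d)-a2)*((c*x+d)-a3) - c^3*((x-a1)*(x-a2)*(x-a3)) =
  (3*c^2*d + e2*c^2 - c^3*e2) * x^2 + (3*c*d^2 + 2*e2*c*d + e1*c - c^3*e1) * x + (d^3+e2*d^2+e1*d+e0 - c^3*e0)"
  if "e2 = -(a1+a2+a3)" "e1 = a1*a2+a1*a3+a2*a3" "e0 = -(a1*a2*a3)" for a1 a2 a3 c d x e2 e1 e0 :: complex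
  unfolding that by (simp add: algebra_simps power2_eq_square power3_eq_cube)

lemma idB: "(x-a1)*(x-a2)*(x-a3) = (x + e2 - u)*(x^2 + u*x + v) + (e1 - v - (e2-u)*u) * x + (e0 - (e2-u)*v)"
  if "e2 = -(a1+a2+a3)" "e1 = a1*a2+a1*a3+a2*a3" "e0 = -(a1*a2*a3)" for a1 a2 a3 u v x e2 e1 e0 :: complex
  unfolding that by (simp add: algebra_simps power2_eq_square power3_eq_cube)

context cubic
begin

lemma stepA:
  assumes F: "is_subfield F" and a: "a \<in> F" and b: "b \<in> F" and b1: "b \<noteq> 1"
   and rel: "a*\<alpha>1 + b*\<alpha>2 + \<alpha>3 = 0"
   and noroot: "\<And>\<gamma>. \<gamma> \<in> F \<Longrightarrow> \<gamma> \<noteq> \<alpha>1 \<and> \<gamma> \<noteq> \<alpha>2 \<and> \<gamma> \<noteq> \<alpha>3"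
  shows "\<exists>\<omega> \<in> gen_field {\<alpha>1,\<alpha>2,\<alpha>3}. primitive_cube_root_of_unity \<omega>"
proof -
  note cl = sfD(1-5)[OF F] sf_div[OF F] sf_pow[OF F] sf_uminus[OF F] sf_numeral[OF F]
  define e2 where "e2 = -(\<alpha>1+\<alpha>2+\<alpha>3)"
  define e1 where "e1 = \<alpha>1*\<alpha>2+\<alpha>1*\<alpha>3+\<alpha>2*\<alpha>3"
  define e0 where "e0 = -(\<alpha>1*\<alpha>2*\<alpha>3)"
  have sF: "\<alpha>1+\<alpha>2+\<alpha>3 \<in> F" using sf_Rats[OF F s1] .
  have e2F: "e2 \<in> F" unfolding e2_def using sf_uminus[OF F sF] .
  have e1F: "e1 \<in> F" unfolding e1_def using sf_Rats[OF F s2] .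
  have e0F: "e0 \<in> F" unfolding e0_def using sf_uminus[OF F sf_Rats[OF F s3]] .
  define c where "c = -(a-1)/(b-1)"
  define d where "d = -(\<alpha>1+\<alpha>2+\<alpha>3)/(b-1)"
  have cF: "c \<in> F" unfolding c_def using a b by (intro cl) auto
  have dF: "d \<in> F" unfolding d_def using sf_div[OF F sf_uminus[OF F sF] sfD(4)[OF F b sfD(2)[OF F]]] .
  have b1': "b - 1 \<noteq> 0" using b1 by simp
  have a2: "\<alpha>2 = c * \<alpha>1 + d"
  proof -
    have h: "(a-1)*\<alpha>1 + (b-1)*\<alpha>2 + (\<alpha>1+\<alpha>2+\<alpha>3) = 0" using rel by (simp add: algebra_simps)
    have ec: "(b-1)*c = -(a-1)" unfolding c_def using b1' by simp
    have ed: "(b-1)*d = -(\<alpha>1+\<alpha>2+\<alpha>3)" unfolding d_def using b1' by simp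
    have "(b-1)*(c*\<alpha>1+d) = ((b-1)*c)*\<alpha>1 + (b-1)*d" by (simp add: algebra_simps)
    also have "\<dots> = -(a-1)*\<alpha>1 - (\<alpha>1+\<alpha>2+\<alpha>3)" using ec ed by simp
    also have "\<dots> = (b-1)*\<alpha>2"
    proof -
      have h3: "\<alpha>3 = -(a*\<alpha>1 + b*\<alpha>2)" using rel by (simp only: add_eq_0_iff)
      show ?thesis unfolding h3 by (simp add: algebra_simps)
    qed
    finally show ?thesis using b1' by simp
  qed
  define Pm where "Pm = (\<lambda>x. (x-\<alpha>1)*(x-\<alpha>2)*(x-\<alpha>3))"
  have Pm0: "Pm x = 0 \<longleftrightarrow> x = \<alpha>1 \<or> x = \<alpha>2 \<or> x = \<alpha>3" for x by (simp add: Pm_def)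
  define R2 where "R2 = 3*c^2*d + e2*c^2 - c^3*e2"
  define R1 where "R1 = 3*c*d^2 + 2*e2*c*d + e1*c - c^3*e1"
  define R0 where "R0 = d^3+e2*d^2+e1*d+e0 - c^3*e0"
  have RF: "R2 \<in> F" "R1 \<in> F" "R0 \<in> F"
    subgoal unfolding R2_def using cF dF e2F e1F e0F by (auto intro!: cl)
    subgoal unfolding R1_def using cF dF e2F e1F e0F by (auto intro!: cl)
    subgoal unfolding R0_def using cF dF e2F e1F e0F by (auto intro!: cl)
    done
  have idR: "Pm (c*x+d) - c^3 * Pm x = R2 * x^2 + R1 * x + R0" for x
    unfolding Pm_def R2_def R1_def R0_def by (rule idA) (simp_all add: e2_def e1_def e0_def)
  have eR: "R2 * \<alpha>1^2 + R1 * \<alpha>1 + R0 = 0"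
    using idR[of \<alpha>1] a2 by (simp add: Pm_def)
  show ?thesis
  proof (cases "R2 = 0")
    case R2ne: False
    define u where "u = R1 / R2"
    define v where "v = R0 / R2"
    have uF: "u \<in> F" "v \<in> F"
    subgoal unfolding u_def using RF by (auto intro!: cl)
    subgoal unfolding v_def using RF by (auto intro!: cl)
    done
    have quad: "\<alpha>1^2 + u * \<alpha>1 + v = 0"
    proof -
      have "R2 * (\<alpha>1^2 + u * \<alpha>1 + v) = 0" using eR R2ne unfolding u_def v_def by (simp add: algebra_simps)
      thus ?thesis using R2ne by simp
    qed
    define A where "A = e1 - v - (e2-u)*u"
    define B where "B = e0 - (e2-u)*v"
    have AF: "A \<in> F" "B \<in> F"
    subgoal unfolding A_def using uF e2F e1F e0F by (auto intro!: cl)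
    subgoal unfolding B_def using uF e2F e1F e0F by (auto intro!: cl)
    done
    have idP: "Pm x = (x + e2 - u)*(x^2 + u*x + v) + A * x + B" for x
      unfolding Pm_def A_def B_def by (rule idB) (simp_all add: e2_def e1_def e0_def)
    have lin: "A * \<alpha>1 + B = 0" using idP[of \<alpha>1] quad by (simp add: Pm_def)
    show ?thesis
    proof (cases "A = 0")
      case False
      hence "\<alpha>1 = - B / A" using lin by (simp add: field_simps eq_neg_iff_add_eq_0)
      moreover have "- B / A \<in> F" using AF by (auto intro!: cl)
      ultimately show ?thesis using noroot by blast
    next
      case True
      hence "B = 0" using lin by simp
      hence "Pm (u - e2) = 0" using idP[of "u - e2"] True by simp
      moreover have "u - e2 \<in> F" using uF e2F by (auto intro!: cl)
      ultimately show ?thesis using noroot Pm0 by blast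
    qed
  next
    case R2z: True
    show ?thesis
    proof (cases "R1 = 0")
      case False
      hence "\<alpha>1 = - R0 / R1" using eR R2z by (simp add: field_simps eq_neg_iff_add_eq_0)
      moreover have "- R0 / R1 \<in> F" using RF by (auto intro!: cl)
      ultimately show ?thesis using noroot by blast
    next
      case R1z: True
      hence R0z: "R0 = 0" using eR R2z by simp
      have phi: "Pm (c*x+d) = c^3 * Pm x" for x using idR[of x] R2z R1z R0z by simp
      have c0: "c \<noteq> 0"
      proof
        assume "c = 0"
        hence "\<alpha>2 = d" using a2 by simp
        thus False using noroot[OF dF] by blast
      qed
      have phr: "c*x+d = \<alpha>1 \<or> c*x+d = \<alpha>2 \<or> c*x+d = \<alpha>3" if "x = \<alpha>1 \<or> x = \<alpha>2 \<or> x = \<alpha>3" for x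
        using phi[of x] that Pm0 by (auto simp: Pm_def)
      have inj: "c*x+d \<noteq> c*y+d" if "x \<noteq> y" for x y using c0 that by simp
      have "c*\<alpha>2+d \<noteq> \<alpha>2" using inj[OF d12[symmetric]] a2 by metis
      hence "c*\<alpha>2+d = \<alpha>1 \<or> c*\<alpha>2+d = \<alpha>3" using phr[of \<alpha>2] by blast
      thus ?thesis
      proof
        assume h: "c*\<alpha>2+d = \<alpha>1"
        have "c*\<alpha>3+d \<noteq> \<alpha>2" using inj[OF d13[symmetric]] a2 by metis
        moreover have "c*\<alpha>3+d \<noteq> \<alpha>1" using inj[OF d23[symmetric]] h by metis
        ultimately have h3: "c*\<alpha>3+d = \<alpha>3" using phr[of \<alpha>3] by blast
        have "\<alpha>2 - \<alpha>1 = (c*\<alpha>1+d) - (c*\<alpha>2+d)" using a2 h by metis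
        hence "(\<alpha>2 - \<alpha>1) = c * (\<alpha>1 - \<alpha>2)" by (simp add: algebra_simps)
        hence "(c + 1) * (\<alpha>1 - \<alpha>2) = 0" by (simp add: algebra_simps)
        hence cm: "c = -1" using d12 by (auto simp: add_eq_0_iff) (metis minus_minus)
        hence "\<alpha>3 = d / 2" using h3 by (simp add: field_simps)
        moreover have "d / 2 \<in> F" using dF by (auto intro!: cl)
        ultimately show ?thesis using noroot by blast
      next
        assume h: "c*\<alpha>2+d = \<alpha>3"
        have "c*\<alpha>3+d \<noteq> \<alpha>2" using inj[OF d13[symmetric]] a2 by metis
        moreover have "c*\<alpha>3+d \<noteq> \<alpha>3" using inj[OF d23[symmetric]] h by metis
        ultimately have h3: "c*\<alpha>3+d = \<alpha>1" using phr[of \<alpha>3] by blast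
        have "\<alpha>3 - \<alpha>2 = (c*\<alpha>2+d) - (c*\<alpha>1+d)" using a2 h by metis
        hence q1: "\<alpha>3 - \<alpha>2 = c * (\<alpha>2 - \<alpha>1)" by (simp add: algebra_simps)
        have "\<alpha>1 - \<alpha>3 = (c*\<alpha>3+d) - (c*\<alpha>2+d)" using h h3 by metis
        hence q2: "\<alpha>1 - \<alpha>3 = c * (\<alpha>3 - \<alpha>2)" by (simp add: algebra_simps)
        have "\<alpha>2 - \<alpha>1 = (c*\<alpha>1+d) - (c*\<alpha>3+d)" using a2 h3 by metis
        hence q3: "\<alpha>2 - \<alpha>1 = c * (\<alpha>1 - \<alpha>3)" by (simp add: algebra_simps)
        have "\<alpha>2 - \<alpha>1 = c * (\<alpha>1 - \<alpha>3)" by (rule q3)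
        also have "\<dots> = c * (c * (\<alpha>3 - \<alpha>2))" using q2 by simp
        also have "\<dots> = c * (c * (c * (\<alpha>2 - \<alpha>1)))" using q1 by simp
        also have "\<dots> = c^3 * (\<alpha>2 - \<alpha>1)" by (simp add: power3_eq_cube mult.assoc)
        finally have "\<alpha>2 - \<alpha>1 = c^3 * (\<alpha>2 - \<alpha>1)" .
        hence c3: "c^3 = 1" using d12 by (metis eq_iff_diff_eq_0 mult_cancel_right2)
        have c1: "c \<noteq> 1"
        proof
          assume "c = 1"
          hence e: "\<alpha>3-\<alpha>2 = \<alpha>2-\<alpha>1" "\<alpha>1-\<alpha>3 = \<alpha>3-\<alpha>2" using q1 q2 by simp_all
          have "3 * (\<alpha>2 - \<alpha>1) = (\<alpha>2-\<alpha>1)+(\<alpha>3-\<alpha>2)+(\<alpha>1-\<alpha>3)" using e by simp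
          also have "\<dots> = 0" by simp
          finally have "3 * (\<alpha>2 - \<alpha>1) = 0" .
          thus False using d12 by simp
        qed
        have cval: "c = (\<alpha>3 - \<alpha>2) / (\<alpha>2 - \<alpha>1)" using q1 d12 by simp
        let ?G = "gen_field {\<alpha>1,\<alpha>2,\<alpha>3}"
        have G: "is_subfield ?G" by (rule gen_field_sf)
        have sub: "{\<alpha>1,\<alpha>2,\<alpha>3} \<subseteq> ?G" by (rule gen_field_sub)
        have "\<alpha>1 \<in> ?G" "\<alpha>2 \<in> ?G" "\<alpha>3 \<in> ?G" using sub by auto
        hence "c \<in> ?G" unfolding cval using sf_div[OF G sfD(4)[OF G] sfD(4)[OF G]] by blast
        thus ?thesis using c3 c1 unfolding primitive_cube_root_of_unity_def by blast
      qed
    qed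
  qed
qed

end



lemma prod_root: "poly (E (prod_mset M)) z = 0 \<Longrightarrow> \<exists>q\<in>#M. poly (E q) z = 0"
  by (induction M) (auto simp: E_one ev_mult)

lemma cyc_min_poly:
  fixes \<zeta> :: complex and N :: nat
  assumes N: "N > 0" and zN: "\<zeta> ^ N = 1"
  shows "\<exists>m. irreducible m \<and> poly (E m) \<zeta> = 0 \<and> (\<forall>z. poly (E m) z = 0 \<longrightarrow> z ^ N = 1)"
proof -
  define P0 :: "rat poly" where "P0 = monom 1 N - 1"
  have ev0: "poly (E P0) z = z ^ N - 1" for z by (simp add: P0_def ev_diff ev_monom E_one)
  have P00: "P0 \<noteq> 0"
  proof
    assume "P0 = 0"
    hence "poly (E P0) 0 = 0" by simp
    thus False using ev0[of 0] N by (simp add: power_0_left)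
  qed
  have "P0 dvd normalize P0" by simp
  then obtain k where k: "normalize P0 = P0 * k" by (rule dvdE)
  have "poly (E (prod_mset (prime_factorization P0))) \<zeta> = 0"
    using prod_mset_prime_factorization[OF P00] k ev0[of \<zeta>] zN by (simp add: ev_mult)
  then obtain q where q: "q \<in># prime_factorization P0" "poly (E q) \<zeta> = 0" using prod_root by blast
  have irr: "irreducible q" using in_prime_factors_imp_prime[OF q(1)]
    by (simp add: prime_elem_imp_irreducible)
  obtain l where l: "P0 = q * l" using in_prime_factors_imp_dvd[OF q(1)] by (rule dvdE)
  have "z ^ N = 1" if "poly (E q) z = 0" for z
    using ev0[of z] l that by (simp add: ev_mult)
  thus ?thesis using irr q(2) by blast
qed

lemma roots_unity_pow:
  fixes N :: nat assumes N: "N > 0" and z: "z ^ N = 1"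
  shows "\<exists>k. z = cis (2 * pi / real N) ^ k"
proof -
  have "z \<in> {z. z ^ N = 1}" using z by simp
  then obtain k where "z = cis (2 * pi * real k / real N)"
    using bij_betw_roots_unity[OF N] unfolding bij_betw_def by auto
  also have "\<dots> = cis (2 * pi / real N) ^ k" by (simp add: DeMoivre mult.commute)
  finally show ?thesis by blast
qed

theorem lemma11:
  fixes p :: "rat poly" and \<alpha>1 \<alpha>2 \<alpha>3 \<xi>1 \<xi>2 \<xi>3 :: complex
  assumes irr: "irreducible p" and deg: "degree p = 3"
    and roots: "poly (map_poly of_rat p) \<alpha>1 = 0" "poly (map_poly of_rat p) \<alpha>2 = 0"
               "poly (map_poly of_rat p) \<alpha>3 = 0"
    and dist: "\<alpha>1 \<noteq> \<alpha>2" "\<alpha>1 \<noteq> \<alpha>3" "\<alpha>2 \<noteq> \<alpha>3"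
    and not_galois: "\<not> galois_over_Q (gen_field {\<alpha>1})"
    and no_cube: "\<not> (\<exists>\<omega>\<in>gen_field {\<alpha>1, \<alpha>2, \<alpha>3}. primitive_cube_root_of_unity \<omega>)"
    and unity: "root_of_unity \<xi>1" "root_of_unity \<xi>2" "root_of_unity \<xi>3"
    and rel: "\<alpha>1 * \<xi>1 + \<alpha>2 * \<xi>2 + \<alpha>3 * \<xi>3 = 0"
  shows "\<xi>1 = \<xi>2 \<and> \<xi>2 = \<xi>3 \<and> \<alpha>1 + \<alpha>2 + \<alpha>3 = 0"
proof -
  have C: "cubic p \<alpha>1 \<alpha>2 \<alpha>3" by (unfold_locales) (use assms in auto)
  have C': "cubic p \<alpha>2 \<alpha>1 \<alpha>3" by (unfold_locales) (use assms in auto)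
  obtain n1 where n1: "n1 > 0" "\<xi>1 ^ n1 = 1" using unity(1) unfolding root_of_unity_def by blast
  obtain n2 where n2: "n2 > 0" "\<xi>2 ^ n2 = 1" using unity(2) unfolding root_of_unity_def by blast
  obtain n3 where n3: "n3 > 0" "\<xi>3 ^ n3 = 1" using unity(3) unfolding root_of_unity_def by blast
  define N where "N = n1 * n2 * n3"
  have N: "N > 0" using n1 n2 n3 by (simp add: N_def)
  have Ns: "N = n1*(n2*n3)" "N = n2*(n1*n3)" "N = n3*(n1*n2)" by (simp_all add: N_def ac_simps)
  have xN: "\<xi>1 ^ N = 1" "\<xi>2 ^ N = 1" "\<xi>3 ^ N = 1"
    subgoal by (subst Ns(1), simp only: power_mult n1(2) power_one)
    subgoal by (subst Ns(2), simp only: power_mult n2(2) power_one)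
    subgoal by (subst Ns(3), simp only: power_mult n3(2) power_one)
    done
  define \<zeta> where "\<zeta> = cis (2 * pi / real N)"
  have zN: "\<zeta> ^ N = 1" using N by (simp add: \<zeta>_def DeMoivre)
  obtain m where m: "irreducible m" "poly (E m) \<zeta> = 0" "\<And>z. poly (E m) z = 0 \<Longrightarrow> z ^ N = 1"
    using cyc_min_poly[OF N zN] by blast
  have Cy: "cyc p \<alpha>1 \<alpha>2 \<alpha>3 \<zeta> m"
    unfolding cyc_def cyc_axioms_def
    using C m roots_unity_pow[OF N] \<zeta>_def by blast
  let ?F = "range (\<lambda>h. poly (E h) \<zeta>)"
  have F: "is_subfield ?F" using cyc.F_sf[OF Cy] .
  have noroot: "\<gamma> \<noteq> \<alpha>1 \<and> \<gamma> \<noteq> \<alpha>2 \<and> \<gamma> \<noteq> \<alpha>3" if g: "\<gamma> \<in> ?F" for \<gamma>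
  proof (rule ccontr)
    assume "\<not> ?thesis"
    hence r: "poly (E p) \<gamma> = 0" using roots by auto
    obtain g where "\<gamma> = poly (E g) \<zeta>" using g by auto
    hence "(\<alpha>1-\<alpha>2)*(\<alpha>1-\<alpha>3)*(\<alpha>2-\<alpha>3) \<in> \<rat>" using cyc.crux[OF Cy] r by blast
    thus False using cubic.galois_of_disc[OF C] not_galois by blast
  qed
  have pw: "\<xi> \<in> ?F" if xi: "\<xi> ^ N = 1" for \<xi>
  proof -
    obtain k where "\<xi> = \<zeta> ^ k" using roots_unity_pow[OF N xi] \<zeta>_def by blast
    hence "\<xi> = poly (E (monom 1 k)) \<zeta>" by (simp add: ev_monom)
    thus ?thesis by blast
  qed
  have x30: "\<xi>3 \<noteq> 0" using xN(3) N by (auto simp: power_0_left)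
  define a where "a = \<xi>1 / \<xi>3"
  define b where "b = \<xi>2 / \<xi>3"
  have aF: "a \<in> ?F" unfolding a_def using sf_div[OF F pw[OF xN(1)] pw[OF xN(3)]] .
  have bF: "b \<in> ?F" unfolding b_def using sf_div[OF F pw[OF xN(2)] pw[OF xN(3)]] .
  have rel': "a * \<alpha>1 + b * \<alpha>2 + \<alpha>3 = 0"
  proof -
    have "(a * \<alpha>1 + b * \<alpha>2 + \<alpha>3) * \<xi>3 = \<alpha>1 * \<xi>1 + \<alpha>2 * \<xi>2 + \<alpha>3 * \<xi>3"
      using x30 unfolding a_def b_def by (simp add: field_simps)
    thus ?thesis using rel x30 by simp
  qed
  have b1: "b = 1"
  proof (rule ccontr)
    assume "b \<noteq> 1"
    thus False using cubic.stepA[OF C F aF bF _ rel' noroot] no_cube by blast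
  qed
  have a1: "a = 1"
  proof (rule ccontr)
    assume "a \<noteq> 1"
    have rel'': "b * \<alpha>2 + a * \<alpha>1 + \<alpha>3 = 0" using rel' by (simp add: algebra_simps)
    have "\<exists>\<omega>\<in>gen_field {\<alpha>2, \<alpha>1, \<alpha>3}. primitive_cube_root_of_unity \<omega>"
      using cubic.stepA[OF C' F bF aF \<open>a \<noteq> 1\<close> rel''] noroot by blast
    moreover have "{\<alpha>2, \<alpha>1, \<alpha>3} = {\<alpha>1, \<alpha>2, \<alpha>3}" by auto
    ultimately show False using no_cube by simp
  qed
  have e1: "\<xi>1 = \<xi>3" using a1 x30 unfolding a_def by simp
  have e2: "\<xi>2 = \<xi>3" using b1 x30 unfolding b_def by simp
  have "(\<alpha>1 + \<alpha>2 + \<alpha>3) * \<xi>3 = 0" using rel e1 e2 by (simp add: algebra_simps)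
  hence "\<alpha>1 + \<alpha>2 + \<alpha>3 = 0" using x30 by simp
  thus ?thesis using e1 e2 by simp
qed



end
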